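(* Fix $i\in\{1,\dots,k\}$ and let $\pi_i$ and $\mathcal{M}^\pi_i$ be defined as in the context. Then $|\mathcal{M}^\pi_i|\le 3\epsilon\cdot 2^{kn}$.
   Context: Setting. $\mathcal{N}$ is a directed network containing nodes $s_1,\dots,s_k,t_1,\dots,t_k$. The network $\mathcal{G}$ is obtained from $\mathcal{N}$ by adding new nodes $s,t,A_1,\dots,A_k,B_1,\dots,B_k$ and, for each $i$, the unit-capacity edges $a_i=(s,A_i)$, two parallel edges $x_i,y_i$ from $A_i$ to $B_i$, $z_i=(A_i,s_i)$, $z'_i=(t_i,B_i)$, and $b_i=(B_i,t)$; the incoming edges of $t$ are exactly $b_1,\dots,b_k$. Admissible error patterns $\boldsymbol r=(r_e)$ are those in which at most one edge $e$ has $r_e\neq0$, with $e\notin\{a_1,\dots,a_k,b_1,\dots,b_k\}$. The output of an edge is its input XOR $r_e$. Let $\mathcal{C}$ be a length-$n$ network code on $\mathcal{G}$. The source $s$ has message $m\in[2^{kn}]$, where $[N]=\{1,\dots,N\}$. An edge $e=(u,v)$ of capacity $c_e$ carries a value in $[2^{nc_e}]$ computed from the signals on the incoming edges of $u$ (and from $m$ if $u=s$). The terminal $t$ decodes the tuple received on $(b_1,\dots,b_k)$ to a message. For an edge $e$, $e(m,\boldsymbol r)$ is the signal received on $e$ under message $m$ and error pattern $\boldsymbol r$, and $e(m)=e(m,\boldsymbol 0)$. Let $\mathcal{M}^{\text{good}}$ be the set of messages $m$ such that $t$ decodes to $m$ under every admissible error pattern when $m$ is sent. Assume $\epsilon\ge0$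 and $|\mathcal{M}^{\text{good}}|\ge(1-\epsilon)2^{kn}$. Define $\pi_i:[2^n]\to[2^n]$ by letting $\pi_i(\hat b)$ be a value $\hat a$ maximizing $|\{m\in\mathcal{M}^{\text{good}}:a_i(m)=\hat a,\ b_i(m)=\hat b\}|$, with ties broken arbitrarily. Let $\mathcal{M}^\pi_i=\{m\in\mathcal{M}^{\text{good}}:\pi_i(b_i(m))\ne a_i(m)\}$. *)

theory Defs
  imports Complex_Main
begin

(* Signals in [2^(n c)] are represented as naturals in {0..<2^(n c)}
   (i.e. bit strings of length n c); XOR is bitwise xor on nat. *)

datatype 'v gnode = Src | Snk | ANode nat | BNode nat | NNode 'v
datatype 'e gedge = EdA nat | EdX nat | EdY nat | EdZ nat | EdZ' nat | EdB nat | NEdge 'e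

fun gtail :: "('e \<Rightarrow> 'v) \<Rightarrow> (nat \<Rightarrow> 'v) \<Rightarrow> 'e gedge \<Rightarrow> 'v gnode" where
  "gtail tailN tN (EdA i) = Src"
| "gtail tailN tN (EdX i) = ANode i"
| "gtail tailN tN (EdY i) = ANode i"
| "gtail tailN tN (EdZ i) = ANode i"
| "gtail tailN tN (EdZ' i) = NNode (tN i)"
| "gtail tailN tN (EdB i) = BNode i"
| "gtail tailN tN (NEdge e) = NNode (tailN e)"

fun ghead :: "('e \<Rightarrow> 'v) \<Rightarrow> (nat \<Rightarrow> 'v) \<Rightarrow> 'e gedge \<Rightarrow> 'v gnode" where
  "ghead headN sN (EdA i) = ANode i"
| "ghead headN sN (EdX i) = BNode i"
| "ghead headN sN (EdY i) = BNode i"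
| "ghead headN sN (EdZ i) = NNode (sN i)"
| "ghead headN sN (EdZ' i) = BNode i"
| "ghead headN sN (EdB i) = Snk"
| "ghead headN sN (NEdge e) = NNode (headN e)"

definition gedges :: "nat \<Rightarrow> 'e set \<Rightarrow> 'e gedge set" where
  "gedges k EN = (\<Union>i\<in>{1..k}. {EdA i, EdX i, EdY i, EdZ i, EdZ' i, EdB i}) \<union> NEdge ` EN"

fun gcap :: "('e \<Rightarrow> nat) \<Rightarrow> 'e gedge \<Rightarrow> nat" where
  "gcap capN (NEdge e) = capN e"
| "gcap capN _ = 1"

definition acyclicN :: "('e \<Rightarrow> 'v) \<Rightarrow> ('e \<Rightarrow> 'v) \<Rightarrow> 'e set \<Rightarrow> bool" where
  "acyclicN tailN headN EN = acyclic {(tailN e, headN e) | e. e \<in> EN}"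

definition is_code ::
  "('e \<Rightarrow> 'v) \<Rightarrow> ('e \<Rightarrow> 'v) \<Rightarrow> 'e set \<Rightarrow> ('e \<Rightarrow> nat) \<Rightarrow> (nat \<Rightarrow> 'v) \<Rightarrow> (nat \<Rightarrow> 'v)
   \<Rightarrow> nat \<Rightarrow> nat \<Rightarrow> ('e gedge \<Rightarrow> ('e gedge \<Rightarrow> nat) \<Rightarrow> nat \<Rightarrow> nat) \<Rightarrow> bool" where
  "is_code tailN headN EN capN sN tN k n enc \<longleftrightarrow>
     (\<forall>e\<in>gedges k EN. \<forall>\<sigma> m. enc e \<sigma> m < 2 ^ (n * gcap capN e)) \<and>
     (\<forall>e\<in>gedges k EN. \<forall>\<sigma> \<sigma>' m m'.
        (\<forall>e'\<in>gedges k EN. ghead headN sN e' = gtail tailN tN e \<longrightarrow> \<sigma> e' = \<sigma>' e') \<longrightarrow>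
        (gtail tailN tN e = Src \<longrightarrow> m = m') \<longrightarrow>
        enc e \<sigma> m = enc e \<sigma>' m')"

text \<open>Since G is acyclic and every
  path has at most |E| edges, |E| rounds of synchronous evaluation give the
  (unique) consistent signal assignment.\<close>
definition gsig :: "'e gedge set \<Rightarrow> ('e gedge \<Rightarrow> ('e gedge \<Rightarrow> nat) \<Rightarrow> nat \<Rightarrow> nat)
    \<Rightarrow> nat \<Rightarrow> ('e gedge \<Rightarrow> nat) \<Rightarrow> 'e gedge \<Rightarrow> nat" where
  "gsig E enc m r =
     ((\<lambda>\<sigma> e. if e \<in> E then xor (enc e \<sigma> m) (r e) else 0) ^^ card E) (\<lambda>_. 0)"

definition admissible :: "nat \<Rightarrow> 'e set \<Rightarrow> ('e \<Rightarrow> nat) \<Rightarrow> nat \<Rightarrow> ('e gedge \<Rightarrow> nat) \<Rightarrow> bool" where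
  "admissible k EN capN n r \<longleftrightarrow>
     (\<exists>e0. \<forall>e. e \<noteq> e0 \<longrightarrow> r e = 0) \<and>
     (\<forall>e. e \<notin> gedges k EN \<longrightarrow> r e = 0) \<and>
     (\<forall>i. r (EdA i) = 0 \<and> r (EdB i) = 0) \<and>
     (\<forall>e. r e < 2 ^ (n * gcap capN e))"

definition decoded :: "nat \<Rightarrow> 'e set \<Rightarrow> ('e gedge \<Rightarrow> ('e gedge \<Rightarrow> nat) \<Rightarrow> nat \<Rightarrow> nat)
    \<Rightarrow> ((nat \<Rightarrow> nat) \<Rightarrow> nat) \<Rightarrow> nat \<Rightarrow> ('e gedge \<Rightarrow> nat) \<Rightarrow> nat" where
  "decoded k EN enc dec m r =
     dec (\<lambda>j. if j \<in> {1..k} then gsig (gedges k EN) enc m r (EdB j) else 0)"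

definition good_msgs :: "nat \<Rightarrow> nat \<Rightarrow> 'e set \<Rightarrow> ('e \<Rightarrow> nat)
    \<Rightarrow> ('e gedge \<Rightarrow> ('e gedge \<Rightarrow> nat) \<Rightarrow> nat \<Rightarrow> nat) \<Rightarrow> ((nat \<Rightarrow> nat) \<Rightarrow> nat) \<Rightarrow> nat set" where
  "good_msgs k n EN capN enc dec =
     {m. m < 2 ^ (k * n) \<and>
         (\<forall>r. admissible k EN capN n r \<longrightarrow> decoded k EN enc dec m r = m)}"

end

theory Submission
  imports Defs "HOL-Library.FuncSet"
begin


fun lvl :: "'v gnode \<Rightarrow> nat" where
  "lvl Src = 0" | "lvl (ANode _) = 1" | "lvl (NNode _) = 2" | "lvl (BNode _) = 3" | "lvl Snk = 4"

lemma xor_lt: "(x::nat) < 2^n \<Longrightarrow> y < 2^n \<Longrightarrow> xor x y < 2^n"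
  by (metis take_bit_nat_eq_self_iff take_bit_xor)

locale netw =
  fixes tailN headN :: "'e \<Rightarrow> 'v" and EN :: "'e set" and capN :: "'e \<Rightarrow> nat"
    and sN tN :: "nat \<Rightarrow> 'v" and k n :: nat
    and enc :: "'e gedge \<Rightarrow> ('e gedge \<Rightarrow> nat) \<Rightarrow> nat \<Rightarrow> nat"
  assumes finEN: "finite EN" and acy: "acyclicN tailN headN EN"
    and code: "is_code tailN headN EN capN sN tN k n enc"
begin

abbreviation "E \<equiv> gedges k EN"
abbreviation "hd' \<equiv> ghead headN sN"
abbreviation "tl' \<equiv> gtail tailN tN"

definition P where "P = {(e',e). e'\<in>E \<and> e\<in>E \<and> hd' e' = tl' e}"
definition RN where "RN = {(tailN e, headN e) | e. e \<in> EN}"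

lemma memE [simp]:
  "EdA j \<in> E \<longleftrightarrow> j \<in> {1..k}" "EdX j \<in> E \<longleftrightarrow> j \<in> {1..k}" "EdY j \<in> E \<longleftrightarrow> j \<in> {1..k}"
  "EdZ j \<in> E \<longleftrightarrow> j \<in> {1..k}" "EdZ' j \<in> E \<longleftrightarrow> j \<in> {1..k}" "EdB j \<in> E \<longleftrightarrow> j \<in> {1..k}"
  "NEdge x \<in> E \<longleftrightarrow> x \<in> EN"
  by (auto simp: gedges_def)

lemma finE: "finite E"
  using finEN by (auto simp: gedges_def)

lemma loc: "e\<in>E \<Longrightarrow> (\<And>e'. e'\<in>E \<Longrightarrow> hd' e' = tl' e \<Longrightarrow> \<sigma> e' = \<sigma>' e') \<Longrightarrow>
   (tl' e = Src \<Longrightarrow> m = m') \<Longrightarrow> enc e \<sigma> m = enc e \<sigma>' m'"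
  using code unfolding is_code_def by blast

lemma bnd: "e\<in>E \<Longrightarrow> enc e \<sigma> m < 2^(n * gcap capN e)"
  using code unfolding is_code_def by blast

definition Qr where "Qr x y \<longleftrightarrow> lvl x < lvl y \<or> (\<exists>u v. x = NNode u \<and> y = NNode v \<and> (u,v) \<in> RN\<^sup>+)"

lemma edge_step: "e' \<in> E \<Longrightarrow> Qr (tl' e') (hd' e')"
  unfolding Qr_def RN_def
  by (cases e') auto

lemma Pstep: "(e',e) \<in> P \<Longrightarrow> Qr (tl' e') (tl' e)"
  unfolding P_def using edge_step by (metis (mono_tags, lifting) case_prodD mem_Collect_eq)

lemma Ptrancl: "(e1,e2) \<in> P\<^sup>+ \<Longrightarrow> Qr (tl' e1) (tl' e2)"
proof (induction rule: trancl_induct)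
  case (base y) then show ?case by (rule Pstep)
next
  case (step y z)
  have a: "Qr (tl' y) (tl' z)" using step(2) by (rule Pstep)
  show ?case using step(3) a unfolding Qr_def
    by (auto intro: trancl_into_trancl)
qed

lemma acycP: "acyclic P"
proof -
  have "(e,e) \<notin> P\<^sup>+" for e
  proof
    assume "(e,e) \<in> P\<^sup>+"
    hence "Qr (tl' e) (tl' e)" by (rule Ptrancl)
    then obtain u where "(u,u) \<in> RN\<^sup>+" unfolding Qr_def by auto
    with acy show False unfolding acyclicN_def RN_def acyclic_def by blast
  qed
  thus ?thesis unfolding acyclic_def by blast
qed

lemma finP: "finite P"
proof -
  have "P \<subseteq> E \<times> E" unfolding P_def by auto
  thus ?thesis using finE finite_subset by blast
qed

lemma wfP: "wf P" using finP acycP by (rule finite_acyclic_wf)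

definition F where "F m r \<sigma> = (\<lambda>e. if e\<in>E then xor (enc e \<sigma> m) (r e) else 0)"

lemma chain: "(F m r ^^ Suc j) z e \<noteq> (F m r ^^ j) z e \<Longrightarrow>
   \<exists>f. f j = e \<and> (\<forall>l<j. (f l, f (Suc l)) \<in> P)"
proof (induction j arbitrary: e)
  case 0 then show ?case by auto
next
  case (Suc j)
  let ?s = "\<lambda>j. (F m r ^^ j) z"
  have ne: "F m r (?s (Suc j)) e \<noteq> F m r (?s j) e" using Suc.prems by simp
  hence eE: "e \<in> E" and ne2: "enc e (?s (Suc j)) m \<noteq> enc e (?s j) m"
    unfolding F_def by (auto split: if_splits)
  obtain e' where e': "e'\<in>E" "hd' e' = tl' e" "?s (Suc j) e' \<noteq> ?s j e'"
    using loc[OF eE, of "?s (Suc j)" "?s j" m m] ne2 by blast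
  obtain f where f: "f j = e'" "\<forall>l<j. (f l, f (Suc l)) \<in> P" using Suc.IH[OF e'(3)] by blast
  define f' where "f' = f(Suc j := e)"
  have "\<forall>l<Suc j. (f' l, f' (Suc l)) \<in> P"
  proof (intro allI impI)
    fix l assume "l < Suc j"
    show "(f' l, f' (Suc l)) \<in> P"
    proof (cases "l = j")
      case True thus ?thesis using f e' eE unfolding f'_def P_def by auto
    next
      case False thus ?thesis using f \<open>l < Suc j\<close> unfolding f'_def by auto
    qed
  qed
  thus ?case unfolding f'_def by (intro exI[of _ "f(Suc j := e)"]) auto
qed

lemma chain_tr: "(\<forall>l<j. (f l, f (Suc l)) \<in> P) \<Longrightarrow> p < q \<Longrightarrow> q \<le> j \<Longrightarrow> (f p, f q) \<in> P\<^sup>+"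
proof (induction q)
  case 0 then show ?case by simp
next
  case (Suc q)
  have st: "(f q, f (Suc q)) \<in> P" using Suc.prems by auto
  show ?case
  proof (cases "p = q")
    case True thus ?thesis using st by auto
  next
    case False
    hence "(f p, f q) \<in> P\<^sup>+" using Suc by auto
    thus ?thesis using st by (rule trancl_into_trancl)
  qed
qed

lemma stab: "(F m r ^^ Suc (card E)) (\<lambda>_. 0) = (F m r ^^ card E) (\<lambda>_. 0)"
proof (rule ext, rule ccontr)
  fix e
  let ?s = "\<lambda>j. (F m r ^^ j) (\<lambda>_. 0)"
  assume ne: "?s (Suc (card E)) e \<noteq> ?s (card E) e"
  have eE: "e \<in> E"
  proof (rule ccontr)
    assume "e \<notin> E"
    hence "?s (Suc j) e = 0" for j by (simp add: F_def)
    moreover have "?s j e = 0" for j using \<open>e\<notin>E\<close> by (cases j) (simp_all add: F_def)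
    ultimately show False using ne by simp
  qed
  obtain f where f: "f (card E) = e" "\<forall>l<card E. (f l, f (Suc l)) \<in> P"
    using chain[OF ne] by blast
  have sub: "f ` {..card E} \<subseteq> E"
  proof
    fix x assume "x \<in> f ` {..card E}"
    then obtain l where l: "l \<le> card E" "x = f l" by auto
    show "x \<in> E"
    proof (cases "l = card E")
      case True thus ?thesis using l f eE by simp
    next
      case False hence "(f l, f (Suc l)) \<in> P" using f l by auto
      thus ?thesis using l unfolding P_def by auto
    qed
  qed
  have "\<not> inj_on f {..card E}"
  proof
    assume "inj_on f {..card E}"
    hence "card (f ` {..card E}) = Suc (card E)" by (simp add: card_image)
    moreover have "card (f ` {..card E}) \<le> card E" using sub finE by (rule card_mono[rotated])
    ultimately show False by simp
  qed
  then obtain p q where pq: "p \<le> card E" "q \<le> card E" "p \<noteq> q" "f p = f q"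
    unfolding inj_on_def by auto
  have "\<exists>p q. p < q \<and> q \<le> card E \<and> f p = f q"
  proof (cases "p < q")
    case True thus ?thesis using pq by auto
  next
    case False thus ?thesis using pq by (intro exI[of _ q] exI[of _ p]) auto
  qed
  then obtain p q where "p < q" "q \<le> card E" "f p = f q" by blast
  hence "(f p, f p) \<in> P\<^sup>+" using chain_tr[OF f(2)] by metis
  thus False using acycP unfolding acyclic_def by blast
qed

definition sig where "sig m r = gsig E enc m r"

lemma sigfix: "sig m r e = (if e\<in>E then xor (enc e (sig m r) m) (r e) else 0)"
proof -
  have h: "sig m r = (F m r ^^ card E) (\<lambda>_. 0)" unfolding sig_def gsig_def by (simp add: F_def[abs_def])
  have "(F m r ^^ Suc (card E)) (\<lambda>_. 0) = F m r ((F m r ^^ card E) (\<lambda>_. 0))" by simp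
  with stab[of m r] h have "sig m r = F m r (sig m r)" by simp
  hence "sig m r e = F m r (sig m r) e" by simp
  thus ?thesis by (simp add: F_def)
qed

lemma agree:
  assumes S: "S \<subseteq> E"
    and src: "\<And>e. e\<in>S \<Longrightarrow> tl' e = Src \<Longrightarrow> m1 = m2"
    and rr: "\<And>e. e\<in>S \<Longrightarrow> r1 e = r2 e"
    and out: "\<And>e e'. e\<in>S \<Longrightarrow> e'\<in>E \<Longrightarrow> hd' e' = tl' e \<Longrightarrow> e' \<notin> S \<Longrightarrow> sig m1 r1 e' = sig m2 r2 e'"
  shows "e \<in> S \<Longrightarrow> sig m1 r1 e = sig m2 r2 e"
proof (induction e rule: wf_induct[OF wfP])
  case (1 e)
  have eE: "e \<in> E" using 1 S by auto
  have "enc e (sig m1 r1) m1 = enc e (sig m2 r2) m2"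
  proof (rule loc[OF eE])
    fix e' assume e': "e'\<in>E" "hd' e' = tl' e"
    show "sig m1 r1 e' = sig m2 r2 e'"
    proof (cases "e' \<in> S")
      case True
      have "(e',e) \<in> P" using e' eE unfolding P_def by auto
      thus ?thesis using 1 True by blast
    next
      case False thus ?thesis using out 1 e' by blast
    qed
  next
    assume "tl' e = Src" thus "m1 = m2" using src 1 by blast
  qed
  thus ?case using sigfix[of m1 r1 e] sigfix[of m2 r2 e] eE rr[OF 1(2)] by simp
qed


lemma hdA: "hd' e' = ANode j \<Longrightarrow> e' = EdA j" by (cases e') auto
lemma hdB: "hd' e' = BNode j \<Longrightarrow> e' = EdX j \<or> e' = EdY j \<or> e' = EdZ' j" by (cases e') auto
lemma hdS: "hd' e' \<noteq> Src" by (cases e') auto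
lemma tlSrc: "tl' e = Src \<Longrightarrow> \<exists>j. e = EdA j" by (cases e) auto
lemma tlB: "tl' e = BNode j \<Longrightarrow> e = EdB j" by (cases e) auto
lemma tlSnk: "tl' e \<noteq> Snk" by (cases e) auto

definition Af where "Af j m = enc (EdA j) (\<lambda>_. 0) m"
definition Xf where "Xf j \<alpha> = enc (EdX j) (\<lambda>e. if e = EdA j then \<alpha> else 0) 0"
definition Yf where "Yf j \<alpha> = enc (EdY j) (\<lambda>e. if e = EdA j then \<alpha> else 0) 0"
definition Zf where "Zf j \<alpha> = enc (EdZ j) (\<lambda>e. if e = EdA j then \<alpha> else 0) 0"
definition Gf where "Gf j x y w = enc (EdB j)
   (\<lambda>e. if e = EdX j then x else if e = EdY j then y else if e = EdZ' j then w else 0) 0"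

lemma sigA: "j\<in>{1..k} \<Longrightarrow> sig m r (EdA j) = xor (Af j m) (r (EdA j))"
proof -
  assume j: "j\<in>{1..k}"
  have "enc (EdA j) (sig m r) m = enc (EdA j) (\<lambda>_. 0) m"
    by (rule loc) (use j hdS in auto)
  thus ?thesis using sigfix[of m r "EdA j"] j by (simp add: Af_def)
qed

lemma sigX: "j\<in>{1..k} \<Longrightarrow> sig m r (EdX j) = xor (Xf j (sig m r (EdA j))) (r (EdX j))"
proof -
  assume j: "j\<in>{1..k}"
  have "enc (EdX j) (sig m r) m = enc (EdX j) (\<lambda>e. if e = EdA j then sig m r (EdA j) else 0) 0"
    by (rule loc) (use j hdA in auto)
  thus ?thesis using sigfix[of m r "EdX j"] j by (simp add: Xf_def)
qed

lemma sigY: "j\<in>{1..k} \<Longrightarrow> sig m r (EdY j) = xor (Yf j (sig m r (EdA j))) (r (EdY j))"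
proof -
  assume j: "j\<in>{1..k}"
  have "enc (EdY j) (sig m r) m = enc (EdY j) (\<lambda>e. if e = EdA j then sig m r (EdA j) else 0) 0"
    by (rule loc) (use j hdA in auto)
  thus ?thesis using sigfix[of m r "EdY j"] j by (simp add: Yf_def)
qed

lemma sigZ: "j\<in>{1..k} \<Longrightarrow> sig m r (EdZ j) = xor (Zf j (sig m r (EdA j))) (r (EdZ j))"
proof -
  assume j: "j\<in>{1..k}"
  have "enc (EdZ j) (sig m r) m = enc (EdZ j) (\<lambda>e. if e = EdA j then sig m r (EdA j) else 0) 0"
    by (rule loc) (use j hdA in auto)
  thus ?thesis using sigfix[of m r "EdZ j"] j by (simp add: Zf_def)
qed

lemma sigB: "j\<in>{1..k} \<Longrightarrow> sig m r (EdB j) =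
   xor (Gf j (sig m r (EdX j)) (sig m r (EdY j)) (sig m r (EdZ' j))) (r (EdB j))"
proof -
  assume j: "j\<in>{1..k}"
  have "enc (EdB j) (sig m r) m = enc (EdB j)
     (\<lambda>e. if e = EdX j then sig m r (EdX j) else if e = EdY j then sig m r (EdY j)
          else if e = EdZ' j then sig m r (EdZ' j) else 0) 0"
  proof (rule loc)
    fix e' assume "hd' e' = tl' (EdB j)"
    hence "e' = EdX j \<or> e' = EdY j \<or> e' = EdZ' j" using hdB by simp
    thus "sig m r e' = (\<lambda>e. if e = EdX j then sig m r (EdX j) else if e = EdY j then sig m r (EdY j)
          else if e = EdZ' j then sig m r (EdZ' j) else 0) e'" by auto
  qed (use j in auto)
  thus ?thesis using sigfix[of m r "EdB j"] j by (simp add: Gf_def)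
qed

lemma sigbnd: "e\<in>E \<Longrightarrow> r e < 2^(n * gcap capN e) \<Longrightarrow> sig m r e < 2^(n * gcap capN e)"
  using sigfix[of m r e] bnd[of e] xor_lt by simp

definition z0 :: "'e gedge \<Rightarrow> nat" where "z0 = (\<lambda>_. 0)"
abbreviation "adm r \<equiv> admissible k EN capN n r"

lemma adm0: "adm z0" unfolding admissible_def z0_def by auto

lemma adm1: "e0 \<in> E \<Longrightarrow> (\<And>j. e0 \<noteq> EdA j \<and> e0 \<noteq> EdB j) \<Longrightarrow> v < 2^(n * gcap capN e0) \<Longrightarrow> adm (z0(e0 := v))"
  unfolding admissible_def z0_def by auto

lemma sig0bnd: "j\<in>{1..k} \<Longrightarrow> sig m z0 (EdZ' j) < 2^n" "j\<in>{1..k} \<Longrightarrow> sig m z0 (EdZ j) < 2^n"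
  "j\<in>{1..k} \<Longrightarrow> sig m z0 (EdA j) < 2^n" "j\<in>{1..k} \<Longrightarrow> sig m z0 (EdB j) < 2^n"
  using sigbnd[of "EdZ' j" z0 m] sigbnd[of "EdZ j" z0 m] sigbnd[of "EdA j" z0 m] sigbnd[of "EdB j" z0 m]
  by (auto simp: z0_def)

definition bvec where "bvec m r = (\<lambda>j. if j\<in>{1..k} then sig m r (EdB j) else 0)"

lemma Zp:
  fixes m :: nat
  assumes i: "i\<in>{1..k}" and w: "w < 2^n"
  defines "r \<equiv> z0(EdZ' i := xor (sig m z0 (EdZ' i)) w)"
  shows "adm r"
    and "bvec m r = (bvec m z0)(i := Gf i (Xf i (sig m z0 (EdA i))) (Yf i (sig m z0 (EdA i))) w)"
proof -
  show "adm r" unfolding r_def using i w sig0bnd(1)[OF i, of m] by (intro adm1) (auto intro: xor_lt)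
  define S where "S = E - {EdZ' i} - range EdB"
  have ag: "e \<in> S \<Longrightarrow> sig m r e = sig m z0 e" for e
  proof (rule agree[of S])
    fix e e' assume a: "e\<in>S" "e'\<in>E" "hd' e' = tl' e" "e'\<notin>S"
    have "False"
    proof (cases e')
      case (EdZ' j) thus False using a tlB[of e j] unfolding S_def by auto
    next
      case (EdB j) thus False using a tlSnk[of e] by auto
    qed (use a in \<open>auto simp: S_def\<close>)
    thus "sig m r e' = sig m z0 e'" by simp
  qed (auto simp: S_def r_def z0_def)
  have "enc (EdZ' i) (sig m r) m = enc (EdZ' i) (sig m z0) m"
  proof (rule loc)
    fix e' assume "e'\<in>E" "hd' e' = tl' (EdZ' i)"
    hence "e' \<in> S" unfolding S_def by (cases e') auto
    thus "sig m r e' = sig m z0 e'" by (rule ag)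
  qed (use i in auto)
  hence zz: "sig m r (EdZ' i) = w"
    using sigfix[of m r "EdZ' i"] sigfix[of m z0 "EdZ' i"] i
    by (simp add: r_def z0_def xor.assoc[symmetric])
  show "bvec m r = (bvec m z0)(i := Gf i (Xf i (sig m z0 (EdA i))) (Yf i (sig m z0 (EdA i))) w)"
  proof (rule ext)
    fix j
    show "bvec m r j = ((bvec m z0)(i := Gf i (Xf i (sig m z0 (EdA i))) (Yf i (sig m z0 (EdA i))) w)) j"
    proof (cases "j \<in> {1..k}")
      case False thus ?thesis using i by (auto simp: bvec_def)
    next
      case True
      show ?thesis
      proof (cases "j = i")
        case ji: True
        have "EdX i \<in> S" "EdY i \<in> S" "EdA i \<in> S" using i by (auto simp: S_def)
        hence "sig m r (EdX i) = Xf i (sig m z0 (EdA i))" "sig m r (EdY i) = Yf i (sig m z0 (EdA i))"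
          using ag sigX[OF i, of m z0] sigY[OF i, of m z0] by (auto simp: z0_def)
        thus ?thesis using ji sigB[OF i, of m r] zz i by (simp add: bvec_def r_def z0_def)
      next
        case False
        have "EdX j \<in> S" "EdY j \<in> S" "EdZ' j \<in> S" using True False by (auto simp: S_def)
        thus ?thesis using False True sigB[OF True, of m r] sigB[OF True, of m z0] ag
          by (simp add: bvec_def r_def z0_def)
      qed
    qed
  qed
qed

lemma tlA: "tl' e = ANode j \<Longrightarrow> e = EdX j \<or> e = EdY j \<or> e = EdZ j" by (cases e) auto

lemma sigA0: "j\<in>{1..k} \<Longrightarrow> adm r \<Longrightarrow> sig m r (EdA j) = sig m z0 (EdA j)"
  using sigA[of j m r] sigA[of j m z0] unfolding admissible_def z0_def by simp

lemma Zerr: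
  fixes m m' :: nat
  assumes i: "i\<in>{1..k}" and same: "\<And>j. j\<in>{1..k} \<Longrightarrow> j \<noteq> i \<Longrightarrow> sig m z0 (EdA j) = sig m' z0 (EdA j)"
  defines "r \<equiv> z0(EdZ i := xor (sig m z0 (EdZ i)) (sig m' z0 (EdZ i)))"
  shows "adm r"
    and "bvec m r = (bvec m' z0)(i := Gf i (Xf i (sig m z0 (EdA i))) (Yf i (sig m z0 (EdA i))) (sig m' z0 (EdZ' i)))"
proof -
  show ad: "adm r" unfolding r_def using i sig0bnd(2)[OF i] by (intro adm1) (auto intro: xor_lt)
  have aa: "j\<in>{1..k} \<Longrightarrow> sig m r (EdA j) = sig m z0 (EdA j)" for j using sigA0[OF _ ad] by simp
  have zi: "sig m r (EdZ i) = sig m' z0 (EdZ i)"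
    using sigZ[OF i, of m r] sigZ[OF i, of m z0] aa[OF i]
    by (simp add: r_def z0_def xor.assoc[symmetric])
  define S where "S = E - range EdA - {EdX i, EdY i, EdZ i, EdB i}"
  have ag: "e \<in> S \<Longrightarrow> sig m r e = sig m' z0 e" for e
  proof (rule agree[of S])
    fix e e' assume a: "e\<in>S" "e'\<in>E" "hd' e' = tl' e" "e'\<notin>S"
    show "sig m r e' = sig m' z0 e'"
    proof (cases e')
      case (EdA j)
      have j: "j \<in> {1..k}" using a EdA by simp
      have "e = EdX j \<or> e = EdY j \<or> e = EdZ j" using a EdA tlA[of e j] by simp
      hence "j \<noteq> i" using a unfolding S_def by auto
      thus ?thesis using EdA aa[OF j] same[OF j] by simp
    next
      case (EdX j) thus ?thesis using a tlB[of e j] unfolding S_def by auto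
    next
      case (EdY j) thus ?thesis using a tlB[of e j] unfolding S_def by auto
    next
      case (EdZ j) thus ?thesis using a zi unfolding S_def by auto
    next
      case (EdZ' j) thus ?thesis using a unfolding S_def by auto
    next
      case (EdB j) thus ?thesis using a tlSnk[of e] by auto
    next
      case (NEdge x) thus ?thesis using a unfolding S_def by auto
    qed
  next
    fix e assume "e \<in> S" "tl' e = Src" thus "m = m'" using tlSrc[of e] unfolding S_def by auto
  qed (auto simp: S_def r_def z0_def)
  show "bvec m r = (bvec m' z0)(i := Gf i (Xf i (sig m z0 (EdA i))) (Yf i (sig m z0 (EdA i))) (sig m' z0 (EdZ' i)))"
  proof (rule ext)
    fix j
    show "bvec m r j = ((bvec m' z0)(i := Gf i (Xf i (sig m z0 (EdA i))) (Yf i (sig m z0 (EdA i))) (sig m' z0 (EdZ' i)))) j"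
    proof (cases "j \<in> {1..k}")
      case False thus ?thesis using i by (auto simp: bvec_def)
    next
      case True
      show ?thesis
      proof (cases "j = i")
        case ji: True
        have "EdZ' i \<in> S" using i by (auto simp: S_def)
        hence "sig m r (EdX i) = Xf i (sig m z0 (EdA i))" "sig m r (EdY i) = Yf i (sig m z0 (EdA i))"
          "sig m r (EdZ' i) = sig m' z0 (EdZ' i)"
          using ag sigX[OF i, of m r] sigY[OF i, of m r] aa[OF i] by (auto simp: z0_def r_def)
        thus ?thesis using ji sigB[OF i, of m r] i by (simp add: bvec_def r_def z0_def)
      next
        case False
        have "EdB j \<in> S" using True False by (auto simp: S_def)
        thus ?thesis using False True ag by (simp add: bvec_def)
      qed
    qed
  qed
qed

lemma same_a:
  assumes "\<And>j. j\<in>{1..k} \<Longrightarrow> sig m z0 (EdA j) = sig m' z0 (EdA j)"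
  shows "bvec m z0 = bvec m' z0"
proof -
  define S where "S = E - range EdA"
  have ag: "e \<in> S \<Longrightarrow> sig m z0 e = sig m' z0 e" for e
  proof (rule agree[of S])
    fix e e' assume a: "e\<in>S" "e'\<in>E" "hd' e' = tl' e" "e'\<notin>S"
    then obtain j where "e' = EdA j" unfolding S_def by auto
    thus "sig m z0 e' = sig m' z0 e'" using a assms by auto
  next
    fix e assume "e \<in> S" "tl' e = Src" thus "m = m'" using tlSrc[of e] unfolding S_def by auto
  qed (auto simp: S_def)
  have "j\<in>{1..k} \<Longrightarrow> sig m z0 (EdB j) = sig m' z0 (EdB j)" for j using ag[of "EdB j"] by (auto simp: S_def)
  thus ?thesis unfolding bvec_def by (intro ext) auto
qed

lemma B0: "i\<in>{1..k} \<Longrightarrow> sig m z0 (EdB i) = Gf i (Xf i (sig m z0 (EdA i))) (Yf i (sig m z0 (EdA i))) (sig m z0 (EdZ' i))"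
  using sigB[of i m z0] sigX[of i m z0] sigY[of i m z0] by (simp add: z0_def)

end

context netw begin
lemma card_tup: "finite {f::nat\<Rightarrow>nat. (\<forall>j\<in>{1..k}. f j < 2^n) \<and> (\<forall>j. j\<notin>{1..k} \<longrightarrow> f j = 0)} \<and>
   card {f::nat\<Rightarrow>nat. (\<forall>j\<in>{1..k}. f j < 2^n) \<and> (\<forall>j. j\<notin>{1..k} \<longrightarrow> f j = 0)} \<le> 2^(k*n)"
proof -
  let ?T = "{f::nat\<Rightarrow>nat. (\<forall>j\<in>{1..k}. f j < 2^n) \<and> (\<forall>j. j\<notin>{1..k} \<longrightarrow> f j = 0)}"
  let ?P = "PiE {1..k} (\<lambda>_. {..<(2::nat)^n})"
  have inj: "inj_on (\<lambda>f. restrict f {1..k}) ?T"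
  proof (rule inj_onI)
    fix f g assume "f \<in> ?T" "g \<in> ?T" and rfg: "restrict f {1..k} = restrict g {1..k}"
    show "f = g"
    proof (rule ext)
      fix j show "f j = g j"
      proof (cases "j \<in> {1..k}")
        case True thus ?thesis using fun_cong[OF rfg, of j] by simp
      qed (use \<open>f \<in> ?T\<close> \<open>g \<in> ?T\<close> in auto)
    qed
  qed
  have sub: "(\<lambda>f. restrict f {1..k}) ` ?T \<subseteq> ?P" by auto
  have finP: "finite ?P" by (intro finite_PiE) auto
  have cP: "card ?P = 2^(k*n)" by (simp add: card_PiE) (metis power_mult mult.commute)
  have "finite ?T" using inj_on_finite[OF inj sub finP] .
  moreover have "card ?T \<le> card ?P" using card_inj_on_le[OF inj sub finP] .
  ultimately show ?thesis using cP by simp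
qed

lemma mainc:
  fixes dec :: "(nat \<Rightarrow> nat) \<Rightarrow> nat" and i :: nat and \<epsilon> :: real and \<pi> :: "nat \<Rightarrow> nat"
    and A B :: "nat \<Rightarrow> nat" and Good :: "nat set"
  assumes i: "i\<in>{1..k}" and eps: "\<epsilon> \<ge> 0"
    and Good_def: "Good = {m. m < 2^(k*n) \<and> (\<forall>r. adm r \<longrightarrow> dec (bvec m r) = m)}"
    and A_def: "A = (\<lambda>m. sig m z0 (EdA i))" and B_def: "B = (\<lambda>m. sig m z0 (EdB i))"
    and cardG: "real (card Good) \<ge> (1 - \<epsilon>) * 2^(k*n)"
    and mx: "\<forall>bh < 2 ^ n. \<forall>ah < 2 ^ n.
           card {m \<in> Good. A m = ah \<and> B m = bh} \<le> card {m \<in> Good. A m = \<pi> bh \<and> B m = bh}"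
  shows "real (card {m \<in> Good. \<pi> (B m) \<noteq> A m}) \<le> 3 * \<epsilon> * 2^(k*n)"
proof -
  define Tup where "Tup = {f::nat\<Rightarrow>nat. (\<forall>j\<in>{1..k}. f j < 2^n) \<and> (\<forall>j. j\<notin>{1..k} \<longrightarrow> f j = 0)}"
  have finT: "finite Tup" and cT: "card Tup \<le> 2^(k*n)" using card_tup unfolding Tup_def by auto
  have finG: "finite Good" unfolding Good_def by (rule finite_subset[of _ "{..<2^(k*n)}"]) auto
  have gd: "m \<in> Good \<Longrightarrow> adm r \<Longrightarrow> dec (bvec m r) = m" for m r unfolding Good_def by auto
  have bT: "adm r \<Longrightarrow> bvec m r \<in> Tup" for m r
  proof -
    assume r: "adm r"
    have "j\<in>{1..k} \<Longrightarrow> sig m r (EdB j) < 2^n" for j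
      using sigbnd[of "EdB j" r m] r unfolding admissible_def by simp
    thus ?thesis unfolding Tup_def bvec_def by auto
  qed
  define Thin where "Thin = {m\<in>Good. \<forall>r. adm r \<longrightarrow> bvec m r = bvec m z0}"
  define Fat where "Fat = Good - Thin"
  have finF: "finite Fat" using finG unfolding Fat_def by simp
  have fatb: "card Good + card Fat \<le> card Tup"
  proof -
    define rr where "rr m = (SOME r. adm r \<and> bvec m r \<noteq> bvec m z0)" for m
    have rrp: "m \<in> Fat \<Longrightarrow> adm (rr m) \<and> bvec m (rr m) \<noteq> bvec m z0" for m
    proof -
      assume "m \<in> Fat"
      hence "\<exists>r. adm r \<and> bvec m r \<noteq> bvec m z0" unfolding Fat_def Thin_def by auto
      thus ?thesis unfolding rr_def by (rule someI_ex)
    qed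
    define g where "g = case_sum (\<lambda>m. bvec m z0) (\<lambda>m. bvec m (rr m))"
    have key: "m1 = m2" if "m1\<in>Good" "m2\<in>Good" "adm r1" "adm r2" "bvec m1 r1 = bvec m2 r2" for m1 m2 r1 r2
      using gd[of m1 r1] gd[of m2 r2] that by simp
    have FG: "Fat \<subseteq> Good" unfolding Fat_def by auto
    have inj: "inj_on g (Good <+> Fat)"
    proof (rule inj_onI)
      fix x y assume x: "x \<in> Good <+> Fat" and y: "y \<in> Good <+> Fat" and e: "g x = g y"
      show "x = y"
      proof (cases x)
        case (Inl m1) note x1 = this
        hence m1: "m1 \<in> Good" using x by auto
        show ?thesis
        proof (cases y)
          case (Inl m2)
          hence "m2 \<in> Good" using y by auto
          hence "m1 = m2" using key[OF m1 _ adm0 adm0, of m2] e x1 Inl by (simp add: g_def)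
          thus ?thesis using x1 Inl by simp
        next
          case (Inr m2)
          hence m2: "m2 \<in> Fat" using y by auto
          have ee: "bvec m1 z0 = bvec m2 (rr m2)" using e x1 Inr by (simp add: g_def)
          hence "m1 = m2" using key[OF m1 _ adm0, of m2 "rr m2"] m2 FG rrp[OF m2] by blast
          thus ?thesis using ee rrp[OF m2] by simp
        qed
      next
        case (Inr m1) note x1 = this
        hence m1: "m1 \<in> Fat" using x by auto
        show ?thesis
        proof (cases y)
          case (Inl m2)
          hence m2: "m2 \<in> Good" using y by auto
          have ee: "bvec m2 z0 = bvec m1 (rr m1)" using e x1 Inl by (simp add: g_def)
          hence "m2 = m1" using key[OF m2 _ adm0, of m1 "rr m1"] m1 FG rrp[OF m1] by blast
          thus ?thesis using ee rrp[OF m1] by simp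
        next
          case (Inr m2)
          hence m2: "m2 \<in> Fat" using y by auto
          have ee: "bvec m1 (rr m1) = bvec m2 (rr m2)" using e x1 Inr by (simp add: g_def)
          hence "m1 = m2" using key[of m1 m2 "rr m1" "rr m2"] m1 m2 FG rrp[OF m1] rrp[OF m2] by blast
          thus ?thesis using x1 Inr by simp
        qed
      qed
    qed
    have sub: "g ` (Good <+> Fat) \<subseteq> Tup"
      using bT adm0 rrp unfolding g_def by auto
    have "card (Good <+> Fat) \<le> card Tup" using card_inj_on_le[OF inj sub finT] .
    thus ?thesis using card_Plus[OF finG finF] by simp
  qed
  have ibd: "i\<in>{1..k}" by (rule i)
  have T1: "m \<in> Thin \<Longrightarrow> w < 2^n \<Longrightarrow> Gf i (Xf i (A m)) (Yf i (A m)) w = B m" for m w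
  proof -
    assume m: "m \<in> Thin" and w: "w < 2^n"
    have "bvec m (z0(EdZ' i := xor (sig m z0 (EdZ' i)) w)) = bvec m z0"
      using m Zp(1)[OF i w, of m] unfolding Thin_def by auto
    hence "((bvec m z0)(i := Gf i (Xf i (A m)) (Yf i (A m)) w)) i = bvec m z0 i"
      using Zp(2)[OF i w, of m] unfolding A_def by simp
    thus ?thesis using i unfolding bvec_def B_def by simp
  qed
  have Bf: "B m = Gf i (Xf i (A m)) (Yf i (A m)) (sig m z0 (EdZ' i))" for m
    using B0[OF i] unfolding A_def B_def by simp
  have T2: "m1 \<in> Thin \<Longrightarrow> m2 \<in> Thin \<Longrightarrow> A m1 = A m2 \<Longrightarrow> B m1 = B m2" for m1 m2
    using Bf[of m1] T1[of m2 "sig m1 z0 (EdZ' i)"] sig0bnd(1)[OF i] by simp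
  have CA: "m \<in> Thin \<Longrightarrow> m' \<in> Good \<Longrightarrow> (\<And>j. j\<in>{1..k} \<Longrightarrow> j \<noteq> i \<Longrightarrow> sig m z0 (EdA j) = sig m' z0 (EdA j))
     \<Longrightarrow> A m \<noteq> A m' \<Longrightarrow> w < 2^n \<Longrightarrow> Gf i (Xf i (A m')) (Yf i (A m')) w \<noteq> B m" for m m' w
  proof
    assume m: "m \<in> Thin" and m': "m' \<in> Good" and same: "\<And>j. j\<in>{1..k} \<Longrightarrow> j \<noteq> i \<Longrightarrow> sig m z0 (EdA j) = sig m' z0 (EdA j)"
      and ne: "A m \<noteq> A m'" and w: "w < 2^n" and eq: "Gf i (Xf i (A m')) (Yf i (A m')) w = B m"
    let ?r = "z0(EdZ i := xor (sig m z0 (EdZ i)) (sig m' z0 (EdZ i)))"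
    have e1: "bvec m ?r = bvec m z0" using m Zerr(1)[OF i same] unfolding Thin_def by auto
    have e2: "bvec m ?r = (bvec m' z0)(i := Gf i (Xf i (sig m z0 (EdA i))) (Yf i (sig m z0 (EdA i))) (sig m' z0 (EdZ' i)))"
      by (rule Zerr(2)[OF i same])
    let ?r' = "z0(EdZ' i := xor (sig m' z0 (EdZ' i)) w)"
    have e3: "bvec m' ?r' = (bvec m' z0)(i := B m)"
      using Zp(2)[OF i w, of m'] eq unfolding A_def by simp
    have bb: "bvec m' ?r' = bvec m z0"
    proof (rule ext)
      fix j show "bvec m' ?r' j = bvec m z0 j"
      proof (cases "j = i")
        case True
        have "bvec m' ?r' i = B m" using fun_cong[OF e3, of i] by simp
        moreover have "bvec m z0 i = B m" using i by (simp add: bvec_def B_def)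
        ultimately show ?thesis using True by simp
      next
        case False
        have "bvec m' z0 j = bvec m z0 j" using fun_cong[OF e1, of j] fun_cong[OF e2, of j] False by simp
        thus ?thesis using e3 False by simp
      qed
    qed
    have mG: "m \<in> Good" using m unfolding Thin_def by simp
    have "m' = dec (bvec m' ?r')" using gd[OF m' Zp(1)[OF i w, of m']] by simp
    also have "\<dots> = dec (bvec m z0)" using bb by simp
    also have "\<dots> = m" using gd[OF mG adm0] .
    finally show False using ne by simp
  qed
  define Atup where "Atup m = (\<lambda>j. if j\<in>{1..k} then sig m z0 (EdA j) else 0)" for m
  have injA: "inj_on Atup Good"
  proof (rule inj_onI)
    fix m1 m2 assume g: "m1 \<in> Good" "m2 \<in> Good" and e: "Atup m1 = Atup m2"
    have "bvec m1 z0 = bvec m2 z0"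
    proof (rule same_a)
      fix j assume j: "j \<in> {1..k}"
      from fun_cong[OF e, of j] show "sig m1 z0 (EdA j) = sig m2 z0 (EdA j)" using j by (simp add: Atup_def)
    qed
    thus "m1 = m2" using gd[OF g(1) adm0] gd[OF g(2) adm0] by metis
  qed
  have AT: "Atup ` Good \<subseteq> Tup"
  proof
    fix x assume "x \<in> Atup ` Good"
    then obtain m where x: "x = Atup m" by auto
    have "j\<in>{1..k} \<Longrightarrow> sig m z0 (EdA j) < 2^n" for j using sig0bnd(3) by blast
    thus "x \<in> Tup" unfolding x Tup_def Atup_def by auto
  qed
  define M where "M = {m \<in> Good. \<pi> (B m) \<noteq> A m}"
  define M1 where "M1 = M \<inter> Fat"
  define M2 where "M2 = {m \<in> M \<inter> Thin. \<exists>m''\<in>Thin. B m'' = B m \<and> A m'' \<noteq> A m}"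
  define M3 where "M3 = {m \<in> M \<inter> Thin. \<forall>m''\<in>Thin. B m'' = B m \<longrightarrow> A m'' = A m}"
  have finM: "finite M" using finG unfolding M_def by simp
  have c5: "card M \<le> card M1 + card M2 + card M3"
  proof -
    have "M = M1 \<union> M2 \<union> M3" unfolding M1_def M2_def M3_def Fat_def M_def Thin_def by blast
    hence "card M \<le> card (M1 \<union> M2) + card M3" by (metis card_Un_le)
    also have "\<dots> \<le> card M1 + card M2 + card M3" using card_Un_le[of M1 M2] by simp
    finally show ?thesis .
  qed
  have c4: "card M1 + card (Fat - M) \<le> card Fat"
  proof -
    have "card (M1 \<union> (Fat - M)) = card M1 + card (Fat - M)"
      by (rule card_Un_disjoint) (use finF in \<open>auto simp: M1_def\<close>)
    moreover have "M1 \<union> (Fat - M) \<subseteq> Fat" unfolding M1_def by auto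
    ultimately show ?thesis using card_mono[OF finF] by metis
  qed
  have c2: "card M2 + card Good \<le> card Tup"
  proof -
    define h where "h m = (SOME m''. m''\<in>Thin \<and> B m'' = B m \<and> A m'' \<noteq> A m)" for m
    have hp: "m \<in> M2 \<Longrightarrow> h m \<in> Thin \<and> B (h m) = B m \<and> A (h m) \<noteq> A m" for m
    proof -
      assume "m \<in> M2"
      hence "\<exists>m''. m''\<in>Thin \<and> B m'' = B m \<and> A m'' \<noteq> A m" unfolding M2_def by auto
      thus ?thesis unfolding h_def by (rule someI_ex)
    qed
    define fm where "fm m = (Atup m)(i := A (h m))" for m
    have M2T: "M2 \<subseteq> Thin" unfolding M2_def by auto
    have ThG: "Thin \<subseteq> Good" unfolding Thin_def by auto
    have offi: "fm m1 = fm m2 \<Longrightarrow> j\<in>{1..k} \<Longrightarrow> j \<noteq> i \<Longrightarrow> sig m1 z0 (EdA j) = sig m2 z0 (EdA j)" for m1 m2 j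
    proof -
      assume e: "fm m1 = fm m2" and j: "j\<in>{1..k}" and ne: "j \<noteq> i"
      from fun_cong[OF e, of j] have "fm m1 j = fm m2 j" .
      thus ?thesis using j ne by (simp add: fm_def Atup_def)
    qed
    have inj: "inj_on fm M2"
    proof (rule inj_onI)
      fix m1 m2 assume m1: "m1 \<in> M2" and m2: "m2 \<in> M2" and e: "fm m1 = fm m2"
      have "A (h m1) = A (h m2)" using fun_cong[OF e, of i] unfolding fm_def by simp
      hence "B (h m1) = B (h m2)" using T2 hp m1 m2 by blast
      hence bb: "B m1 = B m2" using hp m1 m2 by simp
      show "m1 = m2"
      proof (cases "A m1 = A m2")
        case True
        have "Atup m1 = Atup m2"
        proof (rule ext)
          fix j show "Atup m1 j = Atup m2 j"
            using offi[OF e, of j] True unfolding Atup_def A_def by auto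
        qed
        thus ?thesis using injA m1 m2 M2T ThG unfolding inj_on_def by blast
      next
        case False
        have "Gf i (Xf i (A m2)) (Yf i (A m2)) (sig m2 z0 (EdZ' i)) \<noteq> B m1"
          by (rule CA) (use m1 m2 M2T ThG offi[OF e] False sig0bnd(1)[OF i] in auto)
        thus ?thesis using Bf[of m2] bb by simp
      qed
    qed
    have sub: "fm ` M2 \<subseteq> Tup - Atup ` Good"
    proof
      fix t assume "t \<in> fm ` M2"
      then obtain m where m: "m \<in> M2" and t: "t = fm m" by auto
      have inT: "t \<in> Tup"
      proof -
        have "A (h m) < 2^n" unfolding A_def using sig0bnd(3)[OF i] by simp
        moreover have "j\<in>{1..k} \<Longrightarrow> sig m z0 (EdA j) < 2^n" for j using sig0bnd(3) by blast
        ultimately show ?thesis using i unfolding t fm_def Tup_def by (auto simp: Atup_def)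
      qed
      have "t \<notin> Atup ` Good"
      proof
        assume "t \<in> Atup ` Good"
        then obtain m' where m': "m' \<in> Good" "t = Atup m'" by auto
        have tt: "fm m j = Atup m' j" for j using m'(2) t by simp
        have sm: "j\<in>{1..k} \<Longrightarrow> j \<noteq> i \<Longrightarrow> sig m z0 (EdA j) = sig m' z0 (EdA j)" for j
          using tt[of j] by (simp add: fm_def Atup_def)
        have am: "A m' = A (h m)" using tt[of i] i by (simp add: fm_def Atup_def A_def)
        have "Gf i (Xf i (A m')) (Yf i (A m')) (sig (h m) z0 (EdZ' i)) \<noteq> B m"
          by (rule CA) (use m M2T m' sm am hp[OF m] sig0bnd(1)[OF i] in auto)
        thus False using Bf[of "h m"] am hp[OF m] by simp
      qed
      thus "t \<in> Tup - Atup ` Good" using inT by simp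
    qed
    have "card M2 \<le> card (Tup - Atup ` Good)" using card_inj_on_le[OF inj sub] finT by simp
    moreover have "card (Tup - Atup ` Good) = card Tup - card Good"
      using card_Diff_subset[OF finite_imageI[OF finG] AT] card_image[OF injA] by simp
    moreover have "card Good \<le> card Tup" using card_image[OF injA] card_mono[OF finT AT] by simp
    ultimately show ?thesis by simp
  qed
  have c3: "card M3 \<le> card (Fat - M)"
  proof -
    define C where "C = B ` M3"
    define L where "L c = {m\<in>Good. A m = \<pi> c \<and> B m = c}" for c
    define rep where "rep c = (SOME m. m \<in> M3 \<and> B m = c)" for c
    have repp: "c \<in> C \<Longrightarrow> rep c \<in> M3 \<and> B (rep c) = c" for c
    proof -
      assume "c \<in> C" hence "\<exists>m. m \<in> M3 \<and> B m = c" unfolding C_def by auto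
      thus ?thesis unfolding rep_def by (rule someI_ex)
    qed
    have finM3: "finite M3" using finM unfolding M3_def by auto
    have finC: "finite C" unfolding C_def using finM3 by simp
    have eqM3: "M3 = (\<Union>c\<in>C. {m\<in>M3. B m = c})" unfolding C_def by auto
    have "card (\<Union>c\<in>C. {m\<in>M3. B m = c}) = (\<Sum>c\<in>C. card {m\<in>M3. B m = c})"
      by (rule card_UN_disjoint[OF finC]) (use finM3 in auto)
    hence "card M3 = (\<Sum>c\<in>C. card {m\<in>M3. B m = c})" using eqM3 by simp
    also have "\<dots> \<le> (\<Sum>c\<in>C. card (L c))"
    proof (rule sum_mono)
      fix c assume c: "c \<in> C"
      have rc: "rep c \<in> M3" "B (rep c) = c" using repp[OF c] by auto
      have rp: "\<forall>m''\<in>Thin. B m'' = B (rep c) \<longrightarrow> A m'' = A (rep c)" using rc(1) unfolding M3_def by blast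
      have "{m\<in>M3. B m = c} \<subseteq> {m\<in>Good. A m = A (rep c) \<and> B m = c}"
      proof
        fix m assume "m \<in> {m\<in>M3. B m = c}"
        hence m: "m \<in> Thin" "m \<in> Good" "B m = c" unfolding M3_def M_def by auto
        thus "m \<in> {m\<in>Good. A m = A (rep c) \<and> B m = c}" using rp rc(2) by auto
      qed
      hence "card {m\<in>M3. B m = c} \<le> card {m\<in>Good. A m = A (rep c) \<and> B m = c}"
        by (rule card_mono[rotated]) (use finG in auto)
      also have "\<dots> \<le> card (L c)"
      proof -
        have "c < 2^n" using rc(2) sig0bnd(4)[OF i, of "rep c"] unfolding B_def by simp
        moreover have "A (rep c) < 2^n" using sig0bnd(3)[OF i] unfolding A_def by simp
        ultimately show ?thesis using mx unfolding L_def by blast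
      qed
      finally show "card {m\<in>M3. B m = c} \<le> card (L c)" .
    qed
    also have "\<dots> = card (\<Union>c\<in>C. L c)"
    proof (rule card_UN_disjoint[symmetric, OF finC])
      show "\<forall>c\<in>C. finite (L c)" using finG unfolding L_def by simp
      show "\<forall>c\<in>C. \<forall>c'\<in>C. c \<noteq> c' \<longrightarrow> L c \<inter> L c' = {}" unfolding L_def by blast
    qed
    also have "\<dots> \<le> card (Fat - M)"
    proof (rule card_mono)
      show "finite (Fat - M)" using finF by simp
      show "(\<Union>c\<in>C. L c) \<subseteq> Fat - M"
      proof
        fix m assume "m \<in> (\<Union>c\<in>C. L c)"
        then obtain c where c: "c \<in> C" and m: "m \<in> L c" by auto
        have rc: "rep c \<in> M3" "B (rep c) = c" using repp[OF c] by auto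
        have mG: "m \<in> Good" "A m = \<pi> c" "B m = c" using m unfolding L_def by auto
        have "m \<notin> Thin"
        proof
          assume "m \<in> Thin"
          moreover have rp: "\<forall>m''\<in>Thin. B m'' = B (rep c) \<longrightarrow> A m'' = A (rep c)" using rc(1) unfolding M3_def by blast
          ultimately have "A m = A (rep c)" using rc(2) mG(3) by metis
          moreover have "rep c \<in> M" using rc(1) unfolding M3_def by blast
          hence "\<pi> (B (rep c)) \<noteq> A (rep c)" unfolding M_def by blast
          ultimately show False using mG rc by simp
        qed
        thus "m \<in> Fat - M" using mG unfolding Fat_def M_def by auto
      qed
    qed
    finally show ?thesis .
  qed
  define X :: real where "X = 2^(k*n)"
  have r1: "real (card Good) + real (card Fat) \<le> real (card Tup)" using fatb by linarith
  have r2: "real (card M2) + real (card Good) \<le> real (card Tup)" using c2 by linarith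
  have r6: "real (card Tup) \<le> X" unfolding X_def using cT by (metis of_nat_le_iff of_nat_numeral of_nat_power)
  have r5: "real (card M) \<le> real (card M1) + real (card M2) + real (card M3)" using c5 by linarith
  have r3: "real (card M3) \<le> real (card (Fat - M))" using c3 by linarith
  have r4: "real (card M1) + real (card (Fat - M)) \<le> real (card Fat)" using c4 by linarith
  have r7: "0 \<le> \<epsilon> * X" using eps unfolding X_def by simp
  have r8: "real (card Good) \<ge> X - \<epsilon> * X" using cardG unfolding X_def by (simp add: algebra_simps)
  have "real (card M) \<le> 3 * (\<epsilon> * X)" using r1 r2 r3 r4 r5 r6 r7 r8 by linarith
  hence "real (card M) \<le> 3 * \<epsilon> * 2^(k*n)" unfolding X_def by (simp add: mult.assoc)
  thus ?thesis unfolding M_def .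
qed
end

theorem lemma3:
  fixes tailN headN :: "'e \<Rightarrow> 'v" and EN :: "'e set" and capN :: "'e \<Rightarrow> nat"
    and sN tN :: "nat \<Rightarrow> 'v" and k n i :: nat
    and enc :: "'e gedge \<Rightarrow> ('e gedge \<Rightarrow> nat) \<Rightarrow> nat \<Rightarrow> nat"
    and dec :: "(nat \<Rightarrow> nat) \<Rightarrow> nat"
    and \<epsilon> :: real and \<pi> :: "nat \<Rightarrow> nat"
  defines "Good \<equiv> good_msgs k n EN capN enc dec"
    and "a \<equiv> (\<lambda>m. gsig (gedges k EN) enc m (\<lambda>_. 0) (EdA i))"
    and "b \<equiv> (\<lambda>m. gsig (gedges k EN) enc m (\<lambda>_. 0) (EdB i))"
  assumes "finite EN"
    and "acyclicN tailN headN EN"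
    and "is_code tailN headN EN capN sN tN k n enc"
    and "\<epsilon> \<ge> 0"
    and "real (card Good) \<ge> (1 - \<epsilon>) * 2 ^ (k * n)"
    and "i \<in> {1..k}"
    and "\<forall>bh < 2 ^ n. \<pi> bh < 2 ^ n"
    and "\<forall>bh < 2 ^ n. \<forall>ah < 2 ^ n.
           card {m \<in> Good. a m = ah \<and> b m = bh} \<le> card {m \<in> Good. a m = \<pi> bh \<and> b m = bh}"
  shows "real (card {m \<in> Good. \<pi> (b m) \<noteq> a m}) \<le> 3 * \<epsilon> * 2 ^ (k * n)"
proof -
  interpret netw tailN headN EN capN sN tN k n enc
    by unfold_locales (rule assms)+
  have GoodEq: "Good = {m. m < 2^(k*n) \<and> (\<forall>r. admissible k EN capN n r \<longrightarrow> dec (bvec m r) = m)}"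
    unfolding Good_def good_msgs_def decoded_def bvec_def sig_def by simp
  have aEq: "a = (\<lambda>m. sig m z0 (EdA i))" unfolding a_def sig_def z0_def by simp
  have bEq: "b = (\<lambda>m. sig m z0 (EdB i))" unfolding b_def sig_def z0_def by simp
  show ?thesis
    by (rule mainc[OF \<open>i \<in> {1..k}\<close> \<open>\<epsilon> \<ge> 0\<close> GoodEq aEq bEq]) (use assms in auto)
qed

end
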